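(* Let $(\mathcal H,X)$ be a stable arrangement of $n$ hyperplanes in $\mathbb R^d$ and $\mathcal C=\mathrm{code}(\mathcal H,X)$. Then $\mathrm{cham}(\mathcal H,X)=\mathrm{cham}(\mathcal C)$. Moreover, each facet $\sigma$ of $\mathrm{cham}(\mathcal C)$ has a unique chamber $T\in\Gamma(\mathcal C)$.
   Context: An oriented affine hyperplane is $H_i=\{x:w_i\cdot x-h_i=0\}$, $w_i\neq0$, $H_i^+=\{w_i\cdot x-h_i>0\}$. For $\mathcal H=\{H_1,\dots,H_n\}$ and open convex $X$, the atom of $\sigma$ is $A_\sigma=\bigl(\bigcap_{i\in\sigma}(H_i^+\cap X)\bigr)\setminus\bigcup_{j\notin\sigma}H_j^+$ ($A_\emptyset=X\setminus\bigcup_iH_i^+$), and $\mathrm{code}(\mathcal H,X)=\{\sigma:A_\sigma\neq\emptyset\}$. $(\mathcal H,X)$ is stable if $X$ is open convex and whenever $X\cap H_\sigma\ne\emptyset$, $\dim H_\sigma=d-|\sigma|$, where $H_\sigma=\bigcap_{i\in\sigma}H_i$ and $H_\emptyset=\mathbb R^d$. The geometric chamber complex is $\mathrm{cham}(\mathcal H,X)=\{\sigma\subseteq[n]:H_\sigma\cap X\neq\emptyset\}$. Polar complex: $\Gamma(\mathcal C)$ on $[n]\sqcup\{\bar1,\dots,\bar n\}$ consists of all subsets of $\Sigma(\sigma)=\sigma\sqcup\{\bar i:i\notin\sigma\}$, $\sigma\in\mathcal C$. The support $\underline T$ of a face $T$ is the set of $i$ with $i\in T$ or $\bar i\in T$.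 For $S\subseteq[n]$, $\Gamma(2^S)$ is the complex on $S\sqcup\{\bar i:i\in S\}$ whose faces are the subsets containing no pair $\{i,\bar i\}$. $\operatorname{link}_T\Delta=\{\nu\in\Delta:\nu\cap T=\emptyset,\nu\cup T\in\Delta\}$. The combinatorial chamber complex $\mathrm{cham}(\mathcal C)$ is the set of $\sigma\subseteq[n]$ for which there is $T\in\Gamma(\mathcal C)$ with $\underline T=[n]\setminus\sigma$ and $\operatorname{link}_T\Gamma(\mathcal C)=\Gamma(2^\sigma)$; such a $T$ is called a chamber of $\sigma$. *)

theory Defs
  imports "HOL-Analysis.Analysis"
begin

definition hplane :: "(nat \<Rightarrow> 'a::euclidean_space) \<Rightarrow> (nat \<Rightarrow> real) \<Rightarrow> nat \<Rightarrow> 'a set" where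
  "hplane w h i = {x. w i \<bullet> x - h i = 0}"

definition hpos :: "(nat \<Rightarrow> 'a::euclidean_space) \<Rightarrow> (nat \<Rightarrow> real) \<Rightarrow> nat \<Rightarrow> 'a set" where
  "hpos w h i = {x. w i \<bullet> x - h i > 0}"

definition Hint :: "(nat \<Rightarrow> 'a::euclidean_space) \<Rightarrow> (nat \<Rightarrow> real) \<Rightarrow> nat set \<Rightarrow> 'a set" where
  "Hint w h \<sigma> = (\<Inter>i\<in>\<sigma>. hplane w h i)"

definition atom :: "nat \<Rightarrow> (nat \<Rightarrow> 'a::euclidean_space) \<Rightarrow> (nat \<Rightarrow> real) \<Rightarrow> 'a set \<Rightarrow> nat set \<Rightarrow> 'a set" where
  "atom n w h X \<sigma> =
     (if \<sigma> = {} then X - (\<Union>i\<in>{..<n}. hpos w h i)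
      else (\<Inter>i\<in>\<sigma>. hpos w h i \<inter> X) - (\<Union>j\<in>{..<n} - \<sigma>. hpos w h j))"

definition code :: "nat \<Rightarrow> (nat \<Rightarrow> 'a::euclidean_space) \<Rightarrow> (nat \<Rightarrow> real) \<Rightarrow> 'a set \<Rightarrow> nat set set" where
  "code n w h X = {\<sigma>. \<sigma> \<subseteq> {..<n} \<and> atom n w h X \<sigma> \<noteq> {}}"

definition stable :: "nat \<Rightarrow> (nat \<Rightarrow> 'a::euclidean_space) \<Rightarrow> (nat \<Rightarrow> real) \<Rightarrow> 'a set \<Rightarrow> bool" where
  "stable n w h X \<longleftrightarrow> open X \<and> convex X \<and>
     (\<forall>\<sigma>. \<sigma> \<subseteq> {..<n} \<longrightarrow> X \<inter> Hint w h \<sigma> \<noteq> {} \<longrightarrow>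
        aff_dim (Hint w h \<sigma>) = int DIM('a) - int (card \<sigma>))"

definition geo_cham :: "nat \<Rightarrow> (nat \<Rightarrow> 'a::euclidean_space) \<Rightarrow> (nat \<Rightarrow> real) \<Rightarrow> 'a set \<Rightarrow> nat set set" where
  "geo_cham n w h X = {\<sigma>. \<sigma> \<subseteq> {..<n} \<and> Hint w h \<sigma> \<inter> X \<noteq> {}}"

text \<open>Polar complex. Vertex (i, True) stands for i, vertex (i, False) for bar i.\<close>
definition Sig :: "nat \<Rightarrow> nat set \<Rightarrow> (nat \<times> bool) set" where
  "Sig n \<sigma> = {(i, True) | i. i \<in> \<sigma>} \<union> {(i, False) | i. i \<in> {..<n} \<and> i \<notin> \<sigma>}"

definition polar :: "nat \<Rightarrow> nat set set \<Rightarrow> (nat \<times> bool) set set" where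
  "polar n C = {T. \<exists>\<sigma>\<in>C. T \<subseteq> Sig n \<sigma>}"

definition supp :: "(nat \<times> bool) set \<Rightarrow> nat set" where
  "supp T = fst ` T"

definition polar_full :: "nat set \<Rightarrow> (nat \<times> bool) set set" where
  "polar_full S = {T. T \<subseteq> S \<times> UNIV \<and> (\<forall>i. \<not> ((i, True) \<in> T \<and> (i, False) \<in> T))}"

definition link :: "'v set \<Rightarrow> 'v set set \<Rightarrow> 'v set set" where
  "link T \<Delta> = {\<nu>. \<nu> \<in> \<Delta> \<and> \<nu> \<inter> T = {} \<and> \<nu> \<union> T \<in> \<Delta>}"

definition is_chamber :: "nat \<Rightarrow> nat set set \<Rightarrow> nat set \<Rightarrow> (nat \<times> bool) set \<Rightarrow> bool" where
  "is_chamber n C \<sigma> T \<longleftrightarrow> T \<in> polar n C \<and> supp T = {..<n} - \<sigma> \<and>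
     link T (polar n C) = polar_full \<sigma>"

definition comb_cham :: "nat \<Rightarrow> nat set set \<Rightarrow> nat set set" where
  "comb_cham n C = {\<sigma>. \<sigma> \<subseteq> {..<n} \<and> (\<exists>T. is_chamber n C \<sigma> T)}"

definition facet :: "'v set \<Rightarrow> 'v set set \<Rightarrow> bool" where
  "facet \<sigma> \<Delta> \<longleftrightarrow> \<sigma> \<in> \<Delta> \<and> (\<forall>\<tau>\<in>\<Delta>. \<sigma> \<subseteq> \<tau> \<longrightarrow> \<tau> = \<sigma>)"

end

theory Submission
  imports Defs
begin

lemma atom_iff:
  assumes "\<tau> \<subseteq> {..<n}"
  shows "q \<in> atom n w h X \<tau> \<longleftrightarrow> q \<in> X \<and> (\<forall>i<n. q \<in> hpos w h i \<longleftrightarrow> i \<in> \<tau>)"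
  using assms unfolding atom_def by (auto split: if_splits)

lemma code_point:
  assumes "\<tau> \<in> code n w h X"
  shows "\<exists>q\<in>X. \<forall>(i,b)\<in>Sig n \<tau>. (b \<longrightarrow> w i \<bullet> q - h i > 0) \<and> (\<not> b \<longrightarrow> w i \<bullet> q - h i \<le> 0)"
proof -
  from assms have sub: "\<tau> \<subseteq> {..<n}" and ne: "atom n w h X \<tau> \<noteq> {}" unfolding code_def by auto
  then obtain q where "q \<in> atom n w h X \<tau>" by auto
  then have "q \<in> X" "\<forall>i<n. q \<in> hpos w h i \<longleftrightarrow> i \<in> \<tau>" by (simp_all add: atom_iff[OF sub])
  then show ?thesis using sub unfolding Sig_def hpos_def by (auto intro!: bexI[of _ q])
qed

lemma point_code:
  assumes "q \<in> X"
  shows "{i. i < n \<and> q \<in> hpos w h i} \<in> code n w h X"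
proof -
  have "q \<in> atom n w h X {i. i < n \<and> q \<in> hpos w h i}"
    by (subst atom_iff) (use assms in auto)
  then show ?thesis unfolding code_def by auto
qed

lemma comb_sign:
  fixes u v A B :: real
  assumes "u \<ge> 0" "v \<ge> 0"
  shows "A \<ge> 0 \<Longrightarrow> B \<ge> 0 \<Longrightarrow> u * A + v * B \<ge> 0"
    and "A \<le> 0 \<Longrightarrow> B \<le> 0 \<Longrightarrow> u * A + v * B \<le> 0"
  using assms by (simp_all add: mult_nonneg_nonpos add_nonpos_nonpos)

lemma orthant:
  fixes w :: "nat \<Rightarrow> 'a::euclidean_space"
  assumes "finite S"
  shows "convex K \<Longrightarrow> (\<forall>\<epsilon>. \<exists>x\<in>K. \<forall>i\<in>S. (\<epsilon> i \<longrightarrow> w i \<bullet> x - h i \<ge> 0) \<and> (\<not> \<epsilon> i \<longrightarrow> w i \<bullet> x - h i \<le> 0))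
     \<Longrightarrow> \<exists>x\<in>K. \<forall>i\<in>S. w i \<bullet> x = h i"
  using assms
proof (induction S arbitrary: K rule: finite_induct)
  case empty
  then show ?case by auto
next
  case (insert j S)
  define K' where "K' = K \<inter> {x. w j \<bullet> x = h j}"
  have cK': "convex K'" unfolding K'_def using insert.prems(1) convex_hyperplane convex_Int by blast
  have "\<forall>\<epsilon>. \<exists>x\<in>K'. \<forall>i\<in>S. (\<epsilon> i \<longrightarrow> w i \<bullet> x - h i \<ge> 0) \<and> (\<not> \<epsilon> i \<longrightarrow> w i \<bullet> x - h i \<le> 0)"
  proof
    fix \<epsilon> :: "nat \<Rightarrow> bool"
    obtain xp where xp: "xp \<in> K" "\<forall>i\<in>insert j S. ((\<epsilon>(j:=True)) i \<longrightarrow> w i \<bullet> xp - h i \<ge> 0) \<and> (\<not> (\<epsilon>(j:=True)) i \<longrightarrow> w i \<bullet> xp - h i \<le> 0)"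
      using insert.prems(2) by blast
    obtain xm where xm: "xm \<in> K" "\<forall>i\<in>insert j S. ((\<epsilon>(j:=False)) i \<longrightarrow> w i \<bullet> xm - h i \<ge> 0) \<and> (\<not> (\<epsilon>(j:=False)) i \<longrightarrow> w i \<bullet> xm - h i \<le> 0)"
      using insert.prems(2) by blast
    define a where "a = w j \<bullet> xp - h j"
    define b where "b = h j - w j \<bullet> xm"
    have a: "a \<ge> 0" using xp(2) unfolding a_def by auto
    have b: "b \<ge> 0" using xm(2) unfolding b_def by auto
    show "\<exists>x\<in>K'. \<forall>i\<in>S. (\<epsilon> i \<longrightarrow> w i \<bullet> x - h i \<ge> 0) \<and> (\<not> \<epsilon> i \<longrightarrow> w i \<bullet> x - h i \<le> 0)"
    proof (cases "a + b = 0")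
      case True
      then have "a = 0" using a b by linarith
      then have "xp \<in> K'" using xp(1) unfolding K'_def a_def by auto
      moreover have "\<forall>i\<in>S. (\<epsilon> i \<longrightarrow> w i \<bullet> xp - h i \<ge> 0) \<and> (\<not> \<epsilon> i \<longrightarrow> w i \<bullet> xp - h i \<le> 0)"
        using xp(2) insert.hyps(2) by (auto split: if_splits)
      ultimately show ?thesis by blast
    next
      case False
      then have pos: "a + b > 0" using a b by linarith
      define u where "u = b / (a + b)"
      define v where "v = a / (a + b)"
      have u: "u \<ge> 0" and v: "v \<ge> 0"
        using a b pos unfolding u_def v_def by auto
      have uv: "u + v = 1" unfolding u_def v_def using pos
        by (simp add: add_divide_distrib[symmetric])
      define x where "x = u *\<^sub>R xp + v *\<^sub>R xm"
      have xK: "x \<in> K" unfolding x_def using insert.prems(1) xp(1) xm(1) u v uv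
        by (simp add: convex_def)
      have lin: "w i \<bullet> x - h i = u * (w i \<bullet> xp - h i) + v * (w i \<bullet> xm - h i)" for i
      proof -
        have "w i \<bullet> x - h i = u * (w i \<bullet> xp) + v * (w i \<bullet> xm) - (u + v) * h i"
          unfolding x_def using uv by (simp add: inner_add_right)
        then show ?thesis by (simp add: algebra_simps)
      qed
      have "w j \<bullet> x - h j = u * a - v * b" using lin[of j] unfolding a_def b_def by (simp add: algebra_simps)
      also have "\<dots> = 0" unfolding u_def v_def using pos by (simp add: field_simps)
      finally have "x \<in> K'" using xK unfolding K'_def by auto
      moreover have "\<forall>i\<in>S. (\<epsilon> i \<longrightarrow> w i \<bullet> x - h i \<ge> 0) \<and> (\<not> \<epsilon> i \<longrightarrow> w i \<bullet> x - h i \<le> 0)"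
      proof
        fix i assume i: "i \<in> S"
        then have ij: "i \<noteq> j" using insert.hyps(2) by auto
        from xp(2) i ij have p: "(\<epsilon> i \<longrightarrow> w i \<bullet> xp - h i \<ge> 0) \<and> (\<not> \<epsilon> i \<longrightarrow> w i \<bullet> xp - h i \<le> 0)" by auto
        from xm(2) i ij have m: "(\<epsilon> i \<longrightarrow> w i \<bullet> xm - h i \<ge> 0) \<and> (\<not> \<epsilon> i \<longrightarrow> w i \<bullet> xm - h i \<le> 0)" by auto
        show "(\<epsilon> i \<longrightarrow> w i \<bullet> x - h i \<ge> 0) \<and> (\<not> \<epsilon> i \<longrightarrow> w i \<bullet> x - h i \<le> 0)"
          unfolding lin using p m comb_sign[OF u v] by blast
      qed
      ultimately show ?thesis by blast
    qed
  qed
  from insert.IH[OF cK' this] obtain x where "x \<in> K'" "\<forall>i\<in>S. w i \<bullet> x = h i" by blast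
  then show ?case unfolding K'_def by auto
qed

lemma hplane_eq: "hplane w h i = {x. w i \<bullet> x = h i}"
  unfolding hplane_def by auto

lemma Hint_insert: "Hint w h (insert j \<sigma>) = Hint w h \<sigma> \<inter> hplane w h j"
  unfolding Hint_def by auto

lemma mem_Hint: "x \<in> Hint w h \<sigma> \<longleftrightarrow> (\<forall>i\<in>\<sigma>. w i \<bullet> x = h i)"
  unfolding Hint_def hplane_def by auto

lemma affine_Hint: "affine (Hint w h \<sigma>)"
  unfolding Hint_def hplane_eq by (intro affine_Inter) (auto intro: affine_hyperplane)

lemma closed_hplane: "closed (hplane w h j)"
  unfolding hplane_eq by (rule closed_hyperplane)

lemma Sig_single: "(i,b) \<in> Sig n \<tau> \<Longrightarrow> (i,b') \<in> Sig n \<tau> \<Longrightarrow> b = b'"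
  unfolding Sig_def by auto

lemma Sig_lt: "(i,b) \<in> Sig n \<tau> \<Longrightarrow> \<tau> \<subseteq> {..<n} \<Longrightarrow> i < n"
  unfolding Sig_def by auto

lemma chamber_pts:
  assumes "is_chamber n (code n w h X) \<sigma> T"
  shows "\<exists>q\<in>X. (\<forall>i\<in>\<sigma>. (\<epsilon> i \<longrightarrow> w i \<bullet> q - h i \<ge> 0) \<and> (\<not> \<epsilon> i \<longrightarrow> w i \<bullet> q - h i \<le> 0)) \<and>
     (\<forall>(j,b)\<in>T. (b \<longrightarrow> w j \<bullet> q - h j \<ge> 0) \<and> (\<not> b \<longrightarrow> w j \<bullet> q - h j \<le> 0))"
proof -
  define \<nu> where "\<nu> = {(i, \<epsilon> i) | i. i \<in> \<sigma>}"
  have "\<nu> \<in> polar_full \<sigma>" unfolding \<nu>_def polar_full_def by auto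
  then have "\<nu> \<in> link T (polar n (code n w h X))" using assms unfolding is_chamber_def by auto
  then have "\<nu> \<union> T \<in> polar n (code n w h X)" unfolding link_def by auto
  then obtain \<tau> where \<tau>: "\<tau> \<in> code n w h X" "\<nu> \<union> T \<subseteq> Sig n \<tau>" unfolding polar_def by auto
  from code_point[OF \<tau>(1)] obtain q where q: "q \<in> X"
    "\<forall>(i,b)\<in>Sig n \<tau>. (b \<longrightarrow> w i \<bullet> q - h i > 0) \<and> (\<not> b \<longrightarrow> w i \<bullet> q - h i \<le> 0)" by blast
  have "\<forall>i\<in>\<sigma>. (\<epsilon> i \<longrightarrow> w i \<bullet> q - h i \<ge> 0) \<and> (\<not> \<epsilon> i \<longrightarrow> w i \<bullet> q - h i \<le> 0)"
  proof
    fix i assume "i \<in> \<sigma>"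
    then have "(i, \<epsilon> i) \<in> Sig n \<tau>" using \<tau>(2) unfolding \<nu>_def by auto
    then show "(\<epsilon> i \<longrightarrow> w i \<bullet> q - h i \<ge> 0) \<and> (\<not> \<epsilon> i \<longrightarrow> w i \<bullet> q - h i \<le> 0)"
      using q(2) by fastforce
  qed
  moreover have "\<forall>(j,b)\<in>T. (b \<longrightarrow> w j \<bullet> q - h j \<ge> 0) \<and> (\<not> b \<longrightarrow> w j \<bullet> q - h j \<le> 0)"
  proof (intro ballI)
    fix x assume "x \<in> T"
    then have "x \<in> Sig n \<tau>" using \<tau>(2) by auto
    then show "case x of (j,b) \<Rightarrow> (b \<longrightarrow> w j \<bullet> q - h j \<ge> 0) \<and> (\<not> b \<longrightarrow> w j \<bullet> q - h j \<le> 0)"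
      using q(2) by (cases x) (auto dest!: bspec[of _ _ x])
  qed
  ultimately show ?thesis using q(1) by blast
qed

lemma comb_sub_geo:
  assumes "convex X" "\<sigma> \<in> comb_cham n (code n w h X)"
  shows "\<sigma> \<in> geo_cham n w h X"
proof -
  from assms(2) obtain T where sub: "\<sigma> \<subseteq> {..<n}" and T: "is_chamber n (code n w h X) \<sigma> T"
    unfolding comb_cham_def by auto
  have fin: "finite \<sigma>" using sub finite_subset by blast
  have "\<forall>\<epsilon>. \<exists>x\<in>X. \<forall>i\<in>\<sigma>. (\<epsilon> i \<longrightarrow> w i \<bullet> x - h i \<ge> 0) \<and> (\<not> \<epsilon> i \<longrightarrow> w i \<bullet> x - h i \<le> 0)"
    using chamber_pts[OF T] by blast
  from orthant[OF fin assms(1) this] obtain x where "x \<in> X" "\<forall>i\<in>\<sigma>. w i \<bullet> x = h i" by blast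
  then show ?thesis using sub unfolding geo_cham_def mem_Hint[symmetric] by auto
qed

lemma chamber_unique:
  assumes "convex X" and eq: "geo_cham n w h X = comb_cham n (code n w h X)"
    and fac: "facet \<sigma> (comb_cham n (code n w h X))"
    and T: "is_chamber n (code n w h X) \<sigma> T" and T': "is_chamber n (code n w h X) \<sigma> T'"
  shows "T \<subseteq> T'"
proof
  fix x assume x: "x \<in> T"
  obtain j b where jb: "x = (j,b)" by (cases x)
  show "x \<in> T'"
  proof (rule ccontr)
    assume nx: "x \<notin> T'"
    have "j \<in> supp T" using x jb unfolding supp_def by force
    then have j: "j \<in> {..<n} - \<sigma>" using T unfolding is_chamber_def by auto
    then have "j \<in> supp T'" using T' unfolding is_chamber_def by auto
    then obtain b' where b': "(j,b') \<in> T'" unfolding supp_def by force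
    with nx jb have bb: "b' = (\<not> b)" by (cases b; cases b') auto
    have sub: "\<sigma> \<subseteq> {..<n}" using fac unfolding facet_def comb_cham_def by auto
    have fin: "finite (insert j \<sigma>)" using sub j finite_subset by auto
    have "\<forall>\<epsilon>. \<exists>x\<in>X. \<forall>i\<in>insert j \<sigma>. (\<epsilon> i \<longrightarrow> w i \<bullet> x - h i \<ge> 0) \<and> (\<not> \<epsilon> i \<longrightarrow> w i \<bullet> x - h i \<le> 0)"
    proof
      fix \<epsilon> :: "nat \<Rightarrow> bool"
      show "\<exists>x\<in>X. \<forall>i\<in>insert j \<sigma>. (\<epsilon> i \<longrightarrow> w i \<bullet> x - h i \<ge> 0) \<and> (\<not> \<epsilon> i \<longrightarrow> w i \<bullet> x - h i \<le> 0)"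
      proof (cases "\<epsilon> j = b")
        case True
        from chamber_pts[OF T, of \<epsilon>] obtain q where q: "q \<in> X"
          "\<forall>i\<in>\<sigma>. (\<epsilon> i \<longrightarrow> w i \<bullet> q - h i \<ge> 0) \<and> (\<not> \<epsilon> i \<longrightarrow> w i \<bullet> q - h i \<le> 0)"
          "\<forall>(j,b)\<in>T. (b \<longrightarrow> w j \<bullet> q - h j \<ge> 0) \<and> (\<not> b \<longrightarrow> w j \<bullet> q - h j \<le> 0)" by blast
        from q(3) x jb True have "(\<epsilon> j \<longrightarrow> w j \<bullet> q - h j \<ge> 0) \<and> (\<not> \<epsilon> j \<longrightarrow> w j \<bullet> q - h j \<le> 0)" by auto
        then show ?thesis using q(1,2) by blast
      next
        case False
        then have Fe: "\<epsilon> j = b'" using bb by auto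
        from chamber_pts[OF T', of \<epsilon>] obtain q where q: "q \<in> X"
          "\<forall>i\<in>\<sigma>. (\<epsilon> i \<longrightarrow> w i \<bullet> q - h i \<ge> 0) \<and> (\<not> \<epsilon> i \<longrightarrow> w i \<bullet> q - h i \<le> 0)"
          "\<forall>(j,b)\<in>T'. (b \<longrightarrow> w j \<bullet> q - h j \<ge> 0) \<and> (\<not> b \<longrightarrow> w j \<bullet> q - h j \<le> 0)" by blast
        from q(3) b' Fe have "(\<epsilon> j \<longrightarrow> w j \<bullet> q - h j \<ge> 0) \<and> (\<not> \<epsilon> j \<longrightarrow> w j \<bullet> q - h j \<le> 0)" by auto
        then show ?thesis using q(1,2) by blast
      qed
    qed
    from orthant[OF fin assms(1) this] obtain y where "y \<in> X" "\<forall>i\<in>insert j \<sigma>. w i \<bullet> y = h i" by blast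
    then have "insert j \<sigma> \<in> geo_cham n w h X" using sub j unfolding geo_cham_def mem_Hint[symmetric] by auto
    then have "insert j \<sigma> \<in> comb_cham n (code n w h X)" using eq by simp
    with fac have "insert j \<sigma> = \<sigma>" unfolding facet_def by blast
    with j show False by auto
  qed
qed

lemma stable_dim:
  fixes w :: "nat \<Rightarrow> 'a::euclidean_space"
  assumes "stable n w h X" "\<sigma> \<subseteq> {..<n}" "X \<inter> Hint w h \<sigma> \<noteq> {}"
  shows "aff_dim (Hint w h \<sigma>) = int DIM('a) - int (card \<sigma>)"
  using assms unfolding stable_def by blast

lemma generic_point:
  fixes w :: "nat \<Rightarrow> 'a::euclidean_space"
  assumes st: "stable n w h X" and sub: "\<sigma> \<subseteq> {..<n}" and p: "p \<in> X \<inter> Hint w h \<sigma>"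
  shows "\<exists>p'\<in>X \<inter> Hint w h \<sigma>. \<forall>j\<in>{..<n} - \<sigma>. p' \<notin> hplane w h j"
proof -
  have opX: "open X" using st unfolding stable_def by auto
  have finS: "finite \<sigma>" using sub finite_subset by blast
  have dimS: "aff_dim (Hint w h \<sigma>) = int DIM('a) - int (card \<sigma>)"
    using stable_dim[OF st sub] p by auto
  have main: "finite J \<Longrightarrow> J \<subseteq> {..<n} - \<sigma> \<Longrightarrow> X \<inter> Hint w h \<sigma> - \<Union>(hplane w h ` J) \<noteq> {}" for J
  proof (induction J rule: finite_induct)
    case empty
    then show ?case using p by auto
  next
    case (insert j J)
    define U where "U = X \<inter> Hint w h \<sigma> - \<Union>(hplane w h ` J)"
    have Une: "U \<noteq> {}" using insert unfolding U_def by auto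
    have "U = Hint w h \<sigma> \<inter> (X - \<Union>(hplane w h ` J))" unfolding U_def by auto
    moreover have "open (X - \<Union>(hplane w h ` J))"
      using opX insert.hyps(1) closed_hplane by (intro open_Diff closed_Union) auto
    ultimately have "openin (top_of_set (Hint w h \<sigma>)) U" by auto
    then have dU: "aff_dim U = aff_dim (Hint w h \<sigma>)"
      using aff_dim_openin affine_Hint Une by blast
    show ?case
    proof
      assume "X \<inter> Hint w h \<sigma> - \<Union>(hplane w h ` insert j J) = {}"
      then have "U \<subseteq> hplane w h j" unfolding U_def by auto
      then have UH: "U \<subseteq> Hint w h (insert j \<sigma>)" unfolding Hint_insert U_def by auto
      have jn: "j < n" "j \<notin> \<sigma>" using insert.prems by auto
      have sub2: "insert j \<sigma> \<subseteq> {..<n}" using sub jn by auto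
      have "X \<inter> Hint w h (insert j \<sigma>) \<noteq> {}" using UH Une unfolding U_def by auto
      then have "aff_dim (Hint w h (insert j \<sigma>)) = int DIM('a) - int (card (insert j \<sigma>))"
        using stable_dim[OF st sub2] by auto
      also have "\<dots> = int DIM('a) - int (card \<sigma>) - 1" using finS jn by simp
      finally have "aff_dim U \<le> int DIM('a) - int (card \<sigma>) - 1"
        using aff_dim_subset[OF UH] by simp
      then show False using dU dimS by simp
    qed
  qed
  have "X \<inter> Hint w h \<sigma> - \<Union>(hplane w h ` ({..<n} - \<sigma>)) \<noteq> {}" by (rule main) auto
  then show ?thesis by blast
qed

lemma dual_vector:
  fixes w :: "nat \<Rightarrow> 'a::euclidean_space"
  assumes st: "stable n w h X" and sub: "\<sigma> \<subseteq> {..<n}" and p: "p \<in> X \<inter> Hint w h \<sigma>" and i: "i \<in> \<sigma>"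
  shows "\<exists>u. w i \<bullet> u = 1 \<and> (\<forall>k\<in>\<sigma> - {i}. w k \<bullet> u = 0)"
proof -
  have finS: "finite \<sigma>" using sub finite_subset by blast
  have sub': "\<sigma> - {i} \<subseteq> {..<n}" using sub by auto
  have eqS: "Hint w h \<sigma> = Hint w h (\<sigma> - {i}) \<inter> hplane w h i"
    using Hint_insert[of w h i "\<sigma> - {i}"] i by (simp add: insert_absorb)
  have p': "p \<in> Hint w h (\<sigma> - {i})" using p unfolding Hint_def by auto
  have "\<not> Hint w h (\<sigma> - {i}) \<subseteq> hplane w h i"
  proof
    assume "Hint w h (\<sigma> - {i}) \<subseteq> hplane w h i"
    then have "Hint w h \<sigma> = Hint w h (\<sigma> - {i})" using eqS by auto
    moreover have "aff_dim (Hint w h \<sigma>) = int DIM('a) - int (card \<sigma>)"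
      using stable_dim[OF st sub] p by auto
    moreover have "aff_dim (Hint w h (\<sigma> - {i})) = int DIM('a) - int (card (\<sigma> - {i}))"
      using stable_dim[OF st sub'] p p' by auto
    moreover have "card (\<sigma> - {i}) = card \<sigma> - 1" using finS i by simp
    moreover have "card \<sigma> \<ge> 1" using finS i card_gt_0_iff[of \<sigma>] by (auto simp del: card_gt_0_iff)
    ultimately show False by auto
  qed
  then obtain y where y: "y \<in> Hint w h (\<sigma> - {i})" "y \<notin> hplane w h i" by auto
  define c where "c = w i \<bullet> y - h i"
  have c: "c \<noteq> 0" using y(2) unfolding c_def hplane_def by auto
  have pi: "w i \<bullet> p = h i" using p i by (auto simp: mem_Hint)
  define u where "u = (1 / c) *\<^sub>R (y - p)"
  have "w i \<bullet> u = 1" unfolding u_def using c pi by (simp add: inner_diff_right c_def)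
  moreover have "\<forall>k\<in>\<sigma> - {i}. w k \<bullet> u = 0"
    using y(1) p' by (simp add: u_def mem_Hint inner_diff_right)
  ultimately show ?thesis by blast
qed

lemma geo_sub_comb:
  fixes w :: "nat \<Rightarrow> 'a::euclidean_space"
  assumes st: "stable n w h X" and sg: "\<sigma> \<in> geo_cham n w h X"
  shows "\<sigma> \<in> comb_cham n (code n w h X)"
proof -
  have sub: "\<sigma> \<subseteq> {..<n}" and ne: "Hint w h \<sigma> \<inter> X \<noteq> {}" using sg unfolding geo_cham_def by auto
  have opX: "open X" using st unfolding stable_def by auto
  have finS: "finite \<sigma>" using sub finite_subset by blast
  obtain p0 where p0: "p0 \<in> X \<inter> Hint w h \<sigma>" using ne by auto
  obtain p where p: "p \<in> X \<inter> Hint w h \<sigma>" and poff: "\<forall>j\<in>{..<n} - \<sigma>. p \<notin> hplane w h j"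
    using generic_point[OF st sub p0] by blast
  have "\<forall>i\<in>\<sigma>. \<exists>u. w i \<bullet> u = 1 \<and> (\<forall>k\<in>\<sigma> - {i}. w k \<bullet> u = 0)"
    using dual_vector[OF st sub p] by blast
  then obtain U where U: "\<And>i. i \<in> \<sigma> \<Longrightarrow> w i \<bullet> U i = 1 \<and> (\<forall>k\<in>\<sigma> - {i}. w k \<bullet> U i = 0)"
    by metis
  have wU: "w i \<bullet> U k = (if k = i then 1 else 0)" if "i \<in> \<sigma>" "k \<in> \<sigma>" for i k
    using U[OF that(2)] that by auto
  have pS: "\<And>i. i \<in> \<sigma> \<Longrightarrow> w i \<bullet> p = h i" using p by (auto simp: mem_Hint)
  have pJ: "\<And>j. j \<in> {..<n} - \<sigma> \<Longrightarrow> w j \<bullet> p - h j \<noteq> 0" using poff unfolding hplane_def by auto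
  define J where "J = {..<n} - \<sigma>"
  define T where "T = {(j, w j \<bullet> p - h j > 0) | j. j \<in> J}"
  have link_sup: "\<nu> \<union> T \<in> polar n (code n w h X)" if \<nu>: "\<nu> \<in> polar_full \<sigma>" for \<nu>
  proof -
    define s where "s i = (if (i, True) \<in> \<nu> then 1 else - 1 :: real)" for i
    define v where "v = (\<Sum>k\<in>\<sigma>. s k *\<^sub>R U k)"
    have wv: "w i \<bullet> v = s i" if "i \<in> \<sigma>" for i
    proof -
      have "w i \<bullet> v = (\<Sum>k\<in>\<sigma>. s k * (w i \<bullet> U k))" unfolding v_def by (simp add: inner_sum_right)
      also have "\<dots> = (\<Sum>k\<in>\<sigma>. if k = i then s k else 0)"
        by (rule sum.cong) (auto simp: wU[OF that])
      also have "\<dots> = s i" using finS that by simp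
      finally show ?thesis .
    qed
    define F where "F = at_right (0::real)"
    have lim: "((\<lambda>t. p + t *\<^sub>R v) \<longlongrightarrow> p) F"
    proof -
      have "((\<lambda>t. p + t *\<^sub>R v) \<longlongrightarrow> p + 0 *\<^sub>R v) F" unfolding F_def by (intro tendsto_intros)
      then show ?thesis by simp
    qed
    have ev1: "eventually (\<lambda>t. p + t *\<^sub>R v \<in> X) F"
      using topological_tendstoD[OF lim opX] p by auto
    have ev2: "eventually (\<lambda>t. \<forall>j\<in>J. (w j \<bullet> p - h j > 0 \<longrightarrow> w j \<bullet> (p + t *\<^sub>R v) - h j > 0)
        \<and> (\<not> w j \<bullet> p - h j > 0 \<longrightarrow> w j \<bullet> (p + t *\<^sub>R v) - h j < 0)) F"
    proof (rule eventually_ball_finite)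
      show "finite J" unfolding J_def by auto
      show "\<forall>j\<in>J. eventually (\<lambda>t. (w j \<bullet> p - h j > 0 \<longrightarrow> w j \<bullet> (p + t *\<^sub>R v) - h j > 0)
        \<and> (\<not> w j \<bullet> p - h j > 0 \<longrightarrow> w j \<bullet> (p + t *\<^sub>R v) - h j < 0)) F"
      proof
        fix j assume j: "j \<in> J"
        have lj: "((\<lambda>t. w j \<bullet> (p + t *\<^sub>R v) - h j) \<longlongrightarrow> w j \<bullet> p - h j) F"
          by (intro tendsto_intros lim)
        show "eventually (\<lambda>t. (w j \<bullet> p - h j > 0 \<longrightarrow> w j \<bullet> (p + t *\<^sub>R v) - h j > 0)
          \<and> (\<not> w j \<bullet> p - h j > 0 \<longrightarrow> w j \<bullet> (p + t *\<^sub>R v) - h j < 0)) F"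
        proof (cases "w j \<bullet> p - h j > 0")
          case True
          then show ?thesis using order_tendstoD(1)[OF lj True] by (auto elim: eventually_mono)
        next
          case False
          then have neg: "w j \<bullet> p - h j < 0" using pJ j unfolding J_def by force
          show ?thesis using order_tendstoD(2)[OF lj neg] False by (auto elim: eventually_mono)
        qed
      qed
    qed
    have ev3: "eventually (\<lambda>t. 0 < t) F" unfolding F_def by (rule eventually_at_right_less)
    have "F \<noteq> bot" unfolding F_def using trivial_limit_at_right_real trivial_limit_def by blast
    from eventually_happens'[OF this eventually_conj[OF ev1 eventually_conj[OF ev2 ev3]]]
    obtain t where t: "p + t *\<^sub>R v \<in> X" "t > 0"
      "\<forall>j\<in>J. (w j \<bullet> p - h j > 0 \<longrightarrow> w j \<bullet> (p + t *\<^sub>R v) - h j > 0)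
        \<and> (\<not> w j \<bullet> p - h j > 0 \<longrightarrow> w j \<bullet> (p + t *\<^sub>R v) - h j < 0)" by blast
    define q where "q = p + t *\<^sub>R v"
    define \<tau> where "\<tau> = {i. i < n \<and> q \<in> hpos w h i}"
    have \<tau>C: "\<tau> \<in> code n w h X" unfolding \<tau>_def using point_code t(1) q_def by auto
    have qS: "w i \<bullet> q - h i = t * s i" if "i \<in> \<sigma>" for i
      using pS[OF that] wv[OF that] unfolding q_def by (simp add: inner_add_right)
    have "\<nu> \<union> T \<subseteq> Sig n \<tau>"
    proof
      fix x assume x: "x \<in> \<nu> \<union> T"
      obtain i b where ib: "x = (i, b)" by (cases x)
      show "x \<in> Sig n \<tau>"
      proof (cases "x \<in> \<nu>")
        case True
        then have i: "i \<in> \<sigma>" and np: "\<not> ((i, True) \<in> \<nu> \<and> (i, False) \<in> \<nu>)"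
          using \<nu> ib unfolding polar_full_def by auto
        have il: "i < n" using i sub by auto
        show ?thesis
        proof (cases b)
          case True
          then have "s i = 1" using \<open>x \<in> \<nu>\<close> ib unfolding s_def by auto
          then have "q \<in> hpos w h i" using qS[OF i] t(2) unfolding hpos_def by auto
          then show ?thesis using il True ib unfolding Sig_def \<tau>_def by auto
        next
          case False
          then have "s i = -1" using \<open>x \<in> \<nu>\<close> ib np unfolding s_def by auto
          then have "q \<notin> hpos w h i" using qS[OF i] t(2) unfolding hpos_def by auto
          then show ?thesis using il False ib unfolding Sig_def \<tau>_def by auto
        qed
      next
        case False
        then have "x \<in> T" using x by auto
        then have j: "i \<in> J" and bdef: "b = (w i \<bullet> p - h i > 0)" using ib unfolding T_def by auto
        have il: "i < n" using j unfolding J_def by auto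
        show ?thesis
        proof (cases b)
          case True
          then have "q \<in> hpos w h i" using t(3) j bdef unfolding hpos_def q_def by auto
          then show ?thesis using il True ib unfolding Sig_def \<tau>_def by auto
        next
          case False
          then have "q \<notin> hpos w h i" using t(3) j bdef unfolding hpos_def q_def by force
          then show ?thesis using il False ib unfolding Sig_def \<tau>_def by auto
        qed
      qed
    qed
    then show ?thesis using \<tau>C unfolding polar_def by auto
  qed
  have Tpol: "T \<in> polar n (code n w h X)" using link_sup[of "{}"] unfolding polar_full_def by auto
  have suppT: "supp T = {..<n} - \<sigma>" unfolding supp_def T_def J_def by force
  have "link T (polar n (code n w h X)) = polar_full \<sigma>"
  proof
    show "link T (polar n (code n w h X)) \<subseteq> polar_full \<sigma>"
    proof
      fix \<nu> assume "\<nu> \<in> link T (polar n (code n w h X))"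
      then have dis: "\<nu> \<inter> T = {}" and "\<nu> \<union> T \<in> polar n (code n w h X)" unfolding link_def by auto
      then obtain \<tau> where \<tau>: "\<tau> \<in> code n w h X" "\<nu> \<union> T \<subseteq> Sig n \<tau>" unfolding polar_def by auto
      have \<tau>sub: "\<tau> \<subseteq> {..<n}" using \<tau>(1) unfolding code_def by auto
      have "\<nu> \<subseteq> \<sigma> \<times> UNIV"
      proof
        fix x assume x: "x \<in> \<nu>"
        obtain i b where ib: "x = (i, b)" by (cases x)
        have "i < n" using Sig_lt[of i b n \<tau>] \<tau> x ib \<tau>sub by auto
        show "x \<in> \<sigma> \<times> UNIV"
        proof (rule ccontr)
          assume "x \<notin> \<sigma> \<times> UNIV"
          then have "i \<in> J" using ib \<open>i < n\<close> unfolding J_def by auto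
          then have iT: "(i, w i \<bullet> p - h i > 0) \<in> T" unfolding T_def by auto
          then have "b = (w i \<bullet> p - h i > 0)" using Sig_single[of i b n \<tau>] \<tau>(2) x ib by auto
          then show False using iT x ib dis by auto
        qed
      qed
      moreover have "\<forall>i. \<not> ((i, True) \<in> \<nu> \<and> (i, False) \<in> \<nu>)"
        using \<tau>(2) Sig_single[of _ True n \<tau> False] by auto
      ultimately show "\<nu> \<in> polar_full \<sigma>" unfolding polar_full_def by auto
    qed
  next
    show "polar_full \<sigma> \<subseteq> link T (polar n (code n w h X))"
    proof
      fix \<nu> assume \<nu>: "\<nu> \<in> polar_full \<sigma>"
      have u: "\<nu> \<union> T \<in> polar n (code n w h X)" by (rule link_sup[OF \<nu>])
      then have "\<nu> \<in> polar n (code n w h X)" unfolding polar_def by auto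
      moreover have "\<nu> \<inter> T = {}" using \<nu> unfolding polar_full_def T_def J_def by auto
      ultimately show "\<nu> \<in> link T (polar n (code n w h X))" using u unfolding link_def by auto
    qed
  qed
  then have "is_chamber n (code n w h X) \<sigma> T" using Tpol suppT unfolding is_chamber_def by auto
  then show ?thesis using sub unfolding comb_cham_def by auto
qed

theorem proposition3p12:
  fixes n :: nat and w :: "nat \<Rightarrow> 'a::euclidean_space" and h :: "nat \<Rightarrow> real" and X :: "'a set"
  assumes "\<forall>i<n. w i \<noteq> 0"
    and "stable n w h X"
  shows "geo_cham n w h X = comb_cham n (code n w h X) \<and>
         (\<forall>\<sigma>. facet \<sigma> (comb_cham n (code n w h X)) \<longrightarrow>
           (\<exists>!T. is_chamber n (code n w h X) \<sigma> T))"
proof -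
  have cX: "convex X" using assms(2) unfolding stable_def by auto
  have eq: "geo_cham n w h X = comb_cham n (code n w h X)"
    using geo_sub_comb[OF assms(2)] comb_sub_geo[OF cX] by blast
  moreover have "\<forall>\<sigma>. facet \<sigma> (comb_cham n (code n w h X)) \<longrightarrow> (\<exists>!T. is_chamber n (code n w h X) \<sigma> T)"
  proof (intro allI impI)
    fix \<sigma> assume fac: "facet \<sigma> (comb_cham n (code n w h X))"
    then obtain T where T: "is_chamber n (code n w h X) \<sigma> T" unfolding facet_def comb_cham_def by auto
    show "\<exists>!T. is_chamber n (code n w h X) \<sigma> T"
    proof (rule ex1I[where P="is_chamber n (code n w h X) \<sigma>", OF T])
      fix T' assume T': "is_chamber n (code n w h X) \<sigma> T'"
      show "T' = T" using chamber_unique[OF cX eq fac T T'] chamber_unique[OF cX eq fac T' T] by blast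
    qed
  qed
  ultimately show ?thesis by blast
qed

end
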